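(* Let $\alpha\ge0$ and $\rho\in\mathcal{R}_\alpha$. (a) $I_\rho$ is regularly varying of order $(1-\alpha)_+=\max(1-\alpha,0)$, and $$\limsup_{n,M\to\infty}\frac{M\sum_{\ell=1}^n\rho(\ell M)}{I_\rho(nM)}<\infty .$$ If moreover $I_\rho(\infty)<\infty$, then $\limsup_{M\to\infty}M\sum_{\ell=1}^\infty\rho(\ell M)=0$. (b) Suppose $\alpha\in[0,1]$, that $\rho(x)\to0$ as $x\to\infty$ when $\alpha=0$, and that $I_\rho(\infty)=\infty$ when $\alpha=1$. Fix $\mu>0$ and set $M=M(T):=\mu I_\rho(T)$. Then $$\lim_{T\to\infty}\sum_{\ell=1}^{\lceil T/M\rceil}\rho(\ell M)=\frac1\mu .$$
   Context: For $\alpha\ge0$, $\mathcal{R}_\alpha$ denotes the set of measurable functions $\rho:[0,\infty)\to(0,1]$ that are regularly varying of order $-\alpha$, i.e. $\lim_{t\to\infty}\rho(\lambda t)/\rho(t)=\lambda^{-\alpha}$ for every $\lambda>0$. $I_\rho(t):=\int_0^t\rho(s)ds$ and $I_\rho(\infty):=\int_0^\infty\rho(s)ds$. A positive measurable function $f$ is regularly varying of order $\beta$ if $f(\lambda t)/f(t)\to\lambda^\beta$ as $t\to\infty$ for every $\lambda>0$. *)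

theory Defs
  imports "HOL-Analysis.Analysis"
begin

definition RV_class :: "real \<Rightarrow> (real \<Rightarrow> real) \<Rightarrow> bool" where
  "RV_class \<alpha> \<rho> \<longleftrightarrow>
     \<rho> \<in> borel_measurable (restrict_space lborel {0..}) \<and>
     (\<forall>t\<ge>0. 0 < \<rho> t \<and> \<rho> t \<le> 1) \<and>
     (\<forall>c>0. ((\<lambda>t. \<rho> (c * t) / \<rho> t) \<longlongrightarrow> c powr (- \<alpha>)) at_top)"

definition regularly_varying :: "real \<Rightarrow> (real \<Rightarrow> real) \<Rightarrow> bool" where
  "regularly_varying \<beta> f \<longleftrightarrow>
     f \<in> borel_measurable (restrict_space lborel {0..}) \<and>
     (\<forall>t>0. 0 < f t) \<and>
     (\<forall>c>0. ((\<lambda>t. f (c * t) / f t) \<longlongrightarrow> c powr \<beta>) at_top)"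

definition Irho :: "(real \<Rightarrow> real) \<Rightarrow> real \<Rightarrow> real" where
  "Irho \<rho> t = (LINT x:{0..t}|lborel. \<rho> x)"

definition Irho_inf :: "(real \<Rightarrow> real) \<Rightarrow> ennreal" where
  "Irho_inf \<rho> = (\<integral>\<^sup>+ x. indicator {0..} x * ennreal (\<rho> x) \<partial>lborel)"

end

theory Submission
  imports Defs
begin


locale rv =
  fixes \<alpha> :: real and \<rho> :: "real \<Rightarrow> real"
  assumes a0: "\<alpha> \<ge> 0" and RV: "RV_class \<alpha> \<rho>"
begin

lemma pos: "t \<ge> 0 \<Longrightarrow> 0 < \<rho> t" and le1: "t \<ge> 0 \<Longrightarrow> \<rho> t \<le> 1"
  using RV by (auto simp: RV_class_def)

lemma lim: "c > 0 \<Longrightarrow> ((\<lambda>t. \<rho> (c * t) / \<rho> t) \<longlongrightarrow> c powr (- \<alpha>)) at_top"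
  using RV by (auto simp: RV_class_def)

lemma meas0: "(\<lambda>x. indicator {0..} x *\<^sub>R \<rho> x) \<in> borel_measurable lborel"
proof -
  have "\<rho> \<in> borel_measurable (restrict_space lborel {0..})" using RV by (auto simp: RV_class_def)
  then show ?thesis by (subst (asm) borel_measurable_restrict_space_iff) auto
qed

lemma sint: assumes "0 \<le> a" shows "set_integrable lborel {a..b} \<rho>"
proof (rule set_integrable_bound[where f="\<lambda>_. 1::real"])
  show "set_integrable lborel {a..b} (\<lambda>_. 1::real)"
    by (rule borel_integrable_atLeastAtMost') (auto intro: continuous_intros)
  have "(\<lambda>x. indicator {a..b} x * (indicator {0..} x *\<^sub>R \<rho> x)) \<in> borel_measurable lborel"
    using meas0 by measurable
  moreover have "(\<lambda>x. indicator {a..b} x * (indicator {0..} x *\<^sub>R \<rho> x)) = (\<lambda>x. indicator {a..b} x *\<^sub>R \<rho> x)"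
    using assms by (auto simp: indicator_def)
  ultimately show "set_borel_measurable lborel {a..b} \<rho>"
    unfolding set_borel_measurable_def by simp
  show "AE x in lborel. x \<in> {a..b} \<longrightarrow> norm (\<rho> x) \<le> norm (1::real)"
    using assms pos le1 by (auto intro!: AE_I2 simp: abs_of_pos)
qed

lemma intg: "0 \<le> a \<Longrightarrow> \<rho> integrable_on {a..b}"
  using set_borel_integral_eq_integral(1)[OF sint] by blast

lemma I_eq: "0 \<le> t \<Longrightarrow> Irho \<rho> t = integral {0..t} \<rho>"
  unfolding Irho_def using set_borel_integral_eq_integral(2)[OF sint] by simp

lemma I_diff: assumes "0 \<le> a" "a \<le> b" shows "Irho \<rho> b - Irho \<rho> a = integral {a..b} \<rho>"
  using Henstock_Kurzweil_Integration.integral_combine[where a=0 and c=a and b=b and f=\<rho>] intg[of 0 b] assms I_eq by auto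

lemma I_le: assumes "0 \<le> a" "a \<le> b" "\<And>x. x \<in> {a..b} \<Longrightarrow> \<rho> x \<le> K"
  shows "Irho \<rho> b - Irho \<rho> a \<le> K * (b - a)"
proof -
  have "integral {a..b} \<rho> \<le> integral {a..b} (\<lambda>_. K)"
    by (rule integral_le) (use assms intg in auto)
  then show ?thesis using I_diff assms by (simp add: mult.commute)
qed

lemma I_ge: assumes "0 \<le> a" "a \<le> b" "\<And>x. x \<in> {a..b} \<Longrightarrow> K \<le> \<rho> x"
  shows "K * (b - a) \<le> Irho \<rho> b - Irho \<rho> a"
proof -
  have "integral {a..b} (\<lambda>_. K) \<le> integral {a..b} \<rho>"
    by (rule integral_le) (use assms intg in auto)
  then show ?thesis using I_diff assms by (simp add: mult.commute)
qed

lemma I_gen_le: assumes "0 \<le> a" "a \<le> b" "\<And>x. x \<in> {a..b} \<Longrightarrow> \<rho> x \<le> g x" "g integrable_on {a..b}"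
  shows "Irho \<rho> b - Irho \<rho> a \<le> integral {a..b} g"
  using integral_le[of \<rho> "{a..b}" g] assms intg I_diff by auto

lemma I_gen_ge: assumes "0 \<le> a" "a \<le> b" "\<And>x. x \<in> {a..b} \<Longrightarrow> g x \<le> \<rho> x" "g integrable_on {a..b}"
  shows "integral {a..b} g \<le> Irho \<rho> b - Irho \<rho> a"
  using integral_le[of g "{a..b}" \<rho>] assms intg I_diff by auto

lemma I_mono: "0 \<le> a \<Longrightarrow> a \<le> b \<Longrightarrow> Irho \<rho> a \<le> Irho \<rho> b"
  using I_ge[of a b 0] pos[THEN less_imp_le] by auto

lemma I0: "Irho \<rho> 0 = 0"
  using I_eq[of 0] by simp

lemma I_nonneg: "0 \<le> t \<Longrightarrow> 0 \<le> Irho \<rho> t"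
  using I_mono[of 0 t] I0 by simp

lemma I_le_t: "0 \<le> t \<Longrightarrow> Irho \<rho> t \<le> t"
  using I_le[of 0 t 1] I0 le1 by auto

end


context rv begin

definition k :: "real \<Rightarrow> real" where "k x = ln (\<rho> (exp x)) + \<alpha> * x"

lemma k_meas[measurable]: "k \<in> borel_measurable lborel"
proof -
  have "(\<lambda>x. indicator {0..} (exp x) *\<^sub>R \<rho> (exp x)) \<in> borel_measurable lborel"
    using measurable_compose[OF _ meas0, of exp lborel] by measurable
  moreover have "(\<lambda>x. indicator {0..} (exp x) *\<^sub>R \<rho> (exp x)) = (\<lambda>x. \<rho> (exp x))"
    by (auto simp: indicator_def less_imp_le)
  ultimately have [measurable]: "(\<lambda>x. \<rho> (exp x)) \<in> borel_measurable lborel" by simp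
  show ?thesis unfolding k_def by measurable
qed

lemma k_pw: "((\<lambda>x. k (x + u) - k x) \<longlongrightarrow> 0) at_top"
proof -
  have "((\<lambda>x. \<rho> (exp u * exp x) / \<rho> (exp x)) \<longlongrightarrow> exp u powr (- \<alpha>)) at_top"
    using filterlim_compose[OF lim[of "exp u"] exp_at_top] by simp
  then have "((\<lambda>x. ln (\<rho> (exp u * exp x) / \<rho> (exp x)) + \<alpha> * u) \<longlongrightarrow> ln (exp u powr (- \<alpha>)) + \<alpha> * u) at_top"
    by (intro tendsto_intros) auto
  moreover have "ln (exp u powr (- \<alpha>)) + \<alpha> * u = 0" by (simp add: ln_powr)
  moreover have "(\<lambda>x. ln (\<rho> (exp u * exp x) / \<rho> (exp x)) + \<alpha> * u) = (\<lambda>x. k (x + u) - k x)"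
  proof (rule ext)
    fix x
    have "\<rho> (exp u * exp x) > 0" "\<rho> (exp x) > 0" using pos by auto
    then show "ln (\<rho> (exp u * exp x) / \<rho> (exp x)) + \<alpha> * u = k (x + u) - k x"
      by (simp add: k_def exp_add ln_div algebra_simps mult.commute)
  qed
  ultimately show ?thesis by simp
qed

lemma meas_seq:
  fixes z :: "nat \<Rightarrow> real" and e :: real and A :: "nat \<Rightarrow> real set"
  assumes z: "\<And>n. z n \<ge> real n" and e: "e > 0"
  assumes A_def: "A = (\<lambda>n. {y\<in>{0..2}. \<forall>m\<ge>n. \<bar>k (z m + y) - k (z m)\<bar> < e})"
  shows "\<And>n. A n \<in> lmeasurable" "\<And>n. A n \<subseteq> {0..2}"
    "eventually (\<lambda>n. measure lebesgue (A n) > 3/2) sequentially"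
proof -
  have Asets: "A n \<in> sets lborel" for n
  proof -
    have "{y \<in> space lborel. y \<in> {0..2} \<and> (\<forall>m\<in>{n..}. \<bar>k (z m + y) - k (z m)\<bar> < e)} \<in> sets lborel"
      by measurable
    then show ?thesis unfolding A_def by (simp add: atLeast_def)
  qed
  show sub: "A n \<subseteq> {0..2}" for n unfolding A_def by auto
  show "A n \<in> lmeasurable" for n
    by (rule bounded_set_imp_lmeasurable) (use Asets sub[of n] bounded_subset[OF compact_imp_bounded[OF compact_Icc]] in blast)+
  have zt: "filterlim z at_top sequentially"
    by (rule filterlim_at_top_mono[OF filterlim_real_sequentially]) (use z in auto)
  have inc: "incseq A" unfolding A_def incseq_def by auto
  have U: "(\<Union>n. A n) = {0..2}"
  proof
    show "(\<Union>n. A n) \<subseteq> {0..2}" using sub by auto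
    show "{0..2} \<subseteq> (\<Union>n. A n)"
    proof
      fix y :: real assume y: "y \<in> {0..2}"
      have "((\<lambda>m. k (z m + y) - k (z m)) \<longlongrightarrow> 0) sequentially"
        using filterlim_compose[OF k_pw zt] by simp
      then have "eventually (\<lambda>m. \<bar>k (z m + y) - k (z m)\<bar> < e) sequentially"
        using e by (auto simp: tendsto_iff dist_real_def)
      then obtain N where "\<forall>m\<ge>N. \<bar>k (z m + y) - k (z m)\<bar> < e" by (auto simp: eventually_sequentially)
      then have "y \<in> A N" using y unfolding A_def by auto
      then show "y \<in> (\<Union>n. A n)" by auto
    qed
  qed
  have "(\<lambda>n. emeasure lborel (A n)) \<longlonglongrightarrow> emeasure lborel (\<Union>n. A n)"
    by (rule Lim_emeasure_incseq) (use Asets inc in auto)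
  then have "(\<lambda>n. emeasure lborel (A n)) \<longlonglongrightarrow> ennreal 2" using U by simp
  moreover have "ennreal (3/2) < ennreal 2" by (simp add: ennreal_less_iff)
  ultimately have ev: "eventually (\<lambda>n. ennreal (3/2) < emeasure lborel (A n)) sequentially"
    by (rule order_tendstoD)
  show "eventually (\<lambda>n. measure lebesgue (A n) > 3/2) sequentially"
  proof (rule eventually_mono[OF ev])
    fix n assume h: "ennreal (3/2) < emeasure lborel (A n)"
    have fin: "emeasure lborel (A n) \<le> emeasure lborel {0..2::real}"
      by (rule emeasure_mono) (use sub in auto)
    then have "emeasure lborel (A n) = ennreal (measure lborel (A n))"
      by (intro emeasure_eq_ennreal_measure) (auto simp: top_unique)
    with h have "3/2 < measure lborel (A n)"
      by (simp add: ennreal_less_iff)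
    then show "measure lebesgue (A n) > 3/2" using Asets by simp
  qed
qed

end


context rv begin

lemma uct: assumes e: "e > 0" shows "\<exists>X. \<forall>x\<ge>X. \<forall>u\<in>{0..1}. \<bar>k (x + u) - k x\<bar> < e"
proof (rule ccontr)
  assume "\<not> ?thesis"
  then have "\<forall>n::nat. \<exists>x\<ge>real n. \<exists>u\<in>{0..1}. \<bar>k (x + u) - k x\<bar> \<ge> e" by (simp add: not_less)
  then obtain xs us where xs: "\<And>n. xs n \<ge> real n" and us: "\<And>n. us n \<in> {0..1}"
    and bad: "\<And>n. \<bar>k (xs n + us n) - k (xs n)\<bar> \<ge> e"
    by metis
  define ys where "ys n = xs n + us n" for n
  have ys: "ys n \<ge> real n" for n using xs[of n] us[of n] by (auto simp: ys_def)
  define A where "A = (\<lambda>n. {y\<in>{0..2::real}. \<forall>m\<ge>n. \<bar>k (xs m + y) - k (xs m)\<bar> < e/2})"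
  define B where "B = (\<lambda>n. {y\<in>{0..2::real}. \<forall>m\<ge>n. \<bar>k (ys m + y) - k (ys m)\<bar> < e/2})"
  have e2: "e/2 > 0" using e by simp
  note MA = meas_seq[OF xs e2 A_def]
  note MB = meas_seq[OF ys e2 B_def]
  obtain N where NA: "measure lebesgue (A N) > 3/2" and NB: "measure lebesgue (B N) > 3/2"
  proof -
    from eventually_conj[OF MA(3) MB(3)] obtain N where "\<forall>n\<ge>N. measure lebesgue (A n) > 3/2 \<and> measure lebesgue (B n) > 3/2"
      unfolding eventually_sequentially by blast
    then have "measure lebesgue (A N) > 3/2" "measure lebesgue (B N) > 3/2" by blast+
    then show ?thesis by (rule that)
  qed
  define C where "C = (+) (us N) ` B N"
  have Cm: "C \<in> lmeasurable" unfolding C_def by (rule measurable_translation[OF MB(1)])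
  have Cmeas: "measure lebesgue C > 3/2" using NB by (simp add: C_def measure_translation)
  have sub3: "A N \<union> C \<subseteq> {0..3}" using MA(2)[of N] MB(2)[of N] us[of N] by (auto simp: C_def)
  have "A N \<inter> C \<noteq> {}"
  proof
    assume dis: "A N \<inter> C = {}"
    have "measure lebesgue (A N \<union> C) = measure lebesgue (A N) + measure lebesgue C"
      using measure_Un3[OF MA(1) Cm] dis by simp
    also have "\<dots> > 3" using NA Cmeas by simp
    finally have "measure lebesgue (A N \<union> C) > 3" .
    moreover have "measure lebesgue (A N \<union> C) \<le> measure lebesgue {0..3::real}"
      by (rule measure_mono_fmeasurable[OF sub3]) (use MA(1) Cm in auto)
    ultimately show False by simp
  qed
  then obtain y z where y: "y \<in> A N" and z: "z \<in> B N" and yz: "y = us N + z"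
    by (auto simp: C_def)
  have 1: "\<bar>k (xs N + y) - k (xs N)\<bar> < e/2" using y by (auto simp: A_def)
  have 2: "\<bar>k (ys N + z) - k (ys N)\<bar> < e/2" using z by (auto simp: B_def)
  have "xs N + y = ys N + z" using yz by (simp add: ys_def)
  then have "k (xs N + y) = k (ys N + z)" by simp
  then have "\<bar>k (ys N) - k (xs N)\<bar> < e" using 1 2 by linarith
  with bad[of N] show False by (simp add: ys_def)
qed

lemma potter_add: assumes e: "e > 0"
  shows "\<exists>X. \<forall>x\<ge>X. \<forall>u\<ge>0. \<bar>k (x + u) - k x\<bar> \<le> e * (u + 1)"
proof -
  obtain X where X: "\<And>x u. x \<ge> X \<Longrightarrow> u \<in> {0..1} \<Longrightarrow> \<bar>k (x + u) - k x\<bar> < e"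
    using uct[OF e] by blast
  have ind: "\<forall>x\<ge>X. \<forall>u\<in>{0..real n}. \<bar>k (x + u) - k x\<bar> \<le> e * real n" if "n \<ge> 1" for n :: nat
    using that
  proof (induction n rule: dec_induct)
    case base then show ?case using X by (simp add: less_imp_le)
  next
    case (step n)
    show ?case
    proof (intro allI impI ballI)
      fix x u assume x: "x \<ge> X" and u: "u \<in> {0..real (Suc n)}"
      show "\<bar>k (x + u) - k x\<bar> \<le> e * real (Suc n)"
      proof (cases "u \<le> 1")
        case True
        have "\<bar>k (x + u) - k x\<bar> < e" using X[of x u] x u True by auto
        moreover have "e \<le> e * real (Suc n)" using e by simp
        ultimately show ?thesis by linarith
      next
        case False
        have a: "\<bar>k (x + (u - 1)) - k x\<bar> \<le> e * real n" using step(3) x u False by simp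
        have b: "\<bar>k ((x + (u - 1)) + 1) - k (x + (u - 1))\<bar> < e" using X[of "x + (u - 1)" 1] x False by auto
        have "x + (u - 1) + 1 = x + u" by simp
        then show ?thesis using a b by (simp add: algebra_simps)
      qed
    qed
  qed
  show ?thesis
  proof (intro exI allI impI)
    fix x u :: real assume x: "x \<ge> X" and u: "u \<ge> 0"
    define n where "n = max 1 (nat \<lceil>u\<rceil>)"
    have n1: "n \<ge> 1" by (simp add: n_def)
    have "u \<le> real n" unfolding n_def using u by linarith
    then have "\<bar>k (x + u) - k x\<bar> \<le> e * real n" using ind[OF n1] x u by simp
    also have "\<dots> \<le> e * (u + 1)" using e u unfolding n_def by (intro mult_left_mono) linarith+
    finally show "\<bar>k (x + u) - k x\<bar> \<le> e * (u + 1)" .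
  qed
qed

end


lemma powr_int: fixes a b p :: real
  assumes "0 < a" "a \<le> b" "p \<noteq> -1"
  shows "((\<lambda>x. x powr p) has_integral (b powr (p+1) - a powr (p+1)) / (p+1)) {a..b}"
proof -
  have "((\<lambda>x. x powr p) has_integral ((\<lambda>x. x powr (p+1) / (p+1)) b - (\<lambda>x. x powr (p+1) / (p+1)) a)) {a..b}"
  proof (rule fundamental_theorem_of_calculus)
    show "a \<le> b" by fact
    fix x assume x: "x \<in> {a..b}"
    then have "x > 0" using assms by auto
    have "((\<lambda>x. x powr (p+1) / (p+1)) has_real_derivative ((p+1) * x powr (p + 1 - 1)) / (p+1)) (at x)"
      using has_real_derivative_powr[OF \<open>x > 0\<close>, of "p+1"] by (rule DERIV_cdivide)
    then have "((\<lambda>x. x powr (p+1) / (p+1)) has_real_derivative x powr p) (at x)"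
      using assms by simp
    then show "((\<lambda>x. x powr (p+1) / (p+1)) has_vector_derivative x powr p) (at x within {a..b})"
      by (simp add: has_real_derivative_iff_has_vector_derivative[symmetric] has_field_derivative_at_within)
  qed
  then show ?thesis by (simp add: diff_divide_distrib)
qed

context rv begin

lemma potter_ln: assumes e: "e > 0"
  shows "\<exists>t0>0. \<forall>s t. t0 \<le> s \<longrightarrow> s \<le> t \<longrightarrow>
     \<bar>ln (\<rho> t) - ln (\<rho> s) + \<alpha> * (ln t - ln s)\<bar> \<le> e * (ln t - ln s + 1)"
proof -
  obtain X where X: "\<And>x u. x \<ge> X \<Longrightarrow> u \<ge> 0 \<Longrightarrow> \<bar>k (x + u) - k x\<bar> \<le> e * (u + 1)"
    using potter_add[OF e] by blast
  show ?thesis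
  proof (intro exI[of _ "exp X"] conjI allI impI)
    show "exp X > 0" by simp
    fix s t assume s: "exp X \<le> s" and st: "s \<le> t"
    have sp: "s > 0" using s by (meson exp_gt_zero less_le_trans)
    have tp: "t > 0" using sp st by simp
    have "ln s \<ge> X" using s sp by (metis exp_le_cancel_iff exp_ln)
    moreover have "ln t - ln s \<ge> 0" using sp st by simp
    ultimately have "\<bar>k (ln s + (ln t - ln s)) - k (ln s)\<bar> \<le> e * ((ln t - ln s) + 1)" by (rule X)
    then show "\<bar>ln (\<rho> t) - ln (\<rho> s) + \<alpha> * (ln t - ln s)\<bar> \<le> e * (ln t - ln s + 1)"
      using sp tp by (simp add: k_def right_diff_distrib)
  qed
qed

lemma loc: assumes e: "e > 0"
  shows "\<exists>t0>0. \<forall>s t. t0 \<le> s \<longrightarrow> s \<le> t \<longrightarrow> t \<le> 2 * s \<longrightarrow> \<rho> t \<le> exp e * \<rho> s"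
proof -
  obtain t0 where t0: "t0 > 0" and P: "\<And>s t. t0 \<le> s \<Longrightarrow> s \<le> t \<Longrightarrow>
     \<bar>ln (\<rho> t) - ln (\<rho> s) + \<alpha> * (ln t - ln s)\<bar> \<le> e/2 * (ln t - ln s + 1)"
    using potter_ln[of "e/2"] e by auto
  show ?thesis
  proof (intro exI[of _ t0] conjI allI impI)
    show "t0 > 0" by fact
    fix s t assume s: "t0 \<le> s" and st: "s \<le> t" and t2: "t \<le> 2 * s"
    have sp: "s > 0" using s t0 by simp
    have tp: "t > 0" using sp st by simp
    have u0: "ln t - ln s \<ge> 0" using sp st by simp
    have "ln t \<le> ln (2 * s)" using t2 tp by simp
    then have u1: "ln t - ln s \<le> 1" using sp ln_2_less_1 by (simp add: ln_mult)
    have "ln (\<rho> t) - ln (\<rho> s) \<le> e/2 * (ln t - ln s + 1) - \<alpha> * (ln t - ln s)"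
      using abs_le_D1[OF P[OF s st]] by linarith
    also have "\<dots> \<le> e/2 * (ln t - ln s + 1)"
      using u0 a0 by simp
    also have "\<dots> \<le> e/2 * 2"
      using u1 e by (intro mult_left_mono) auto
    also have "\<dots> = e" by simp
    finally have "ln (\<rho> t) \<le> e + ln (\<rho> s)" by simp
    then have "exp (ln (\<rho> t)) \<le> exp (e + ln (\<rho> s))" by simp
    then show "\<rho> t \<le> exp e * \<rho> s" using pos sp tp by (simp add: exp_add)
  qed
qed

lemma potter: assumes e: "e > 0"
  shows "\<exists>t0>0. \<forall>s t. t0 \<le> s \<longrightarrow> s \<le> t \<longrightarrow>
     \<rho> s \<le> exp e * \<rho> t * (t/s) powr (\<alpha> + e) \<and> exp (-e) * \<rho> t * (t/s) powr (\<alpha> - e) \<le> \<rho> s"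
proof -
  obtain t0 where t0: "t0 > 0" and P: "\<And>s t. t0 \<le> s \<Longrightarrow> s \<le> t \<Longrightarrow>
     \<bar>ln (\<rho> t) - ln (\<rho> s) + \<alpha> * (ln t - ln s)\<bar> \<le> e * (ln t - ln s + 1)"
    using potter_ln[OF e] by auto
  show ?thesis
  proof (intro exI[of _ t0] conjI allI impI)
    show "t0 > 0" by fact
    fix s t assume s: "t0 \<le> s" and st: "s \<le> t"
    have sp: "s > 0" using s t0 by simp
    have tp: "t > 0" using sp st by simp
    have rs: "\<rho> s > 0" "\<rho> t > 0" using pos sp tp by auto
    define u where "u = ln t - ln s"
    have pw: "(t/s) powr c = exp (c * u)" for c using sp tp by (simp add: powr_def u_def ln_div)
    have Pu: "\<bar>ln (\<rho> t) - ln (\<rho> s) + \<alpha> * u\<bar> \<le> e * (u + 1)"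
      using P[OF s st] unfolding u_def .
    have eq: "e * (u + 1) = e * u + e" "(\<alpha> + e) * u = \<alpha> * u + e * u" "(\<alpha> - e) * u = \<alpha> * u - e * u"
      by (simp_all add: algebra_simps)
    have "ln (\<rho> s) \<le> e + ln (\<rho> t) + (\<alpha> + e) * u"
      using abs_le_D2[OF Pu] eq by linarith
    then have "exp (ln (\<rho> s)) \<le> exp (e + ln (\<rho> t) + (\<alpha> + e) * u)" by simp
    then show "\<rho> s \<le> exp e * \<rho> t * (t/s) powr (\<alpha> + e)"
      using rs by (simp add: pw exp_add)
    have X1: "ln (\<rho> t) - ln (\<rho> s) + \<alpha> * u \<le> e * u + e"
      using abs_le_D1[OF Pu] eq(1) by simp
    have "-e + ln (\<rho> t) + (\<alpha> - e) * u \<le> ln (\<rho> s)"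
      unfolding eq(3) using X1 by linarith
    then have "exp (-e + ln (\<rho> t) + (\<alpha> - e) * u) \<le> exp (ln (\<rho> s))" by simp
    then show "exp (-e) * \<rho> t * (t/s) powr (\<alpha> - e) \<le> \<rho> s"
      using rs by (simp add: pw exp_add exp_diff exp_minus field_simps)
  qed
qed

end


context rv begin

lemma I_pos: assumes t: "t > 0" shows "Irho \<rho> t > 0"
proof -
  have nn: "Irho \<rho> t \<ge> 0" using I_nonneg t by simp
  have "Irho \<rho> t \<noteq> 0"
  proof
    assume z: "Irho \<rho> t = 0"
    have int: "integrable lborel (\<lambda>x. indicator {0..t} x *\<^sub>R \<rho> x)"
      using sint[of 0 t] by (simp add: set_integrable_def)
    have "integral\<^sup>L lborel (\<lambda>x. indicator {0..t} x *\<^sub>R \<rho> x) = 0"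
      using z by (simp add: Irho_def set_lebesgue_integral_def)
    moreover have "AE x in lborel. 0 \<le> indicator {0..t} x *\<^sub>R \<rho> x"
      using pos by (auto intro!: AE_I2 simp: indicator_def less_imp_le)
    ultimately have "AE x in lborel. indicator {0..t} x *\<^sub>R \<rho> x = 0"
      using integral_nonneg_eq_0_iff_AE[OF int] by simp
    moreover have "{x\<in>space lborel. \<not> (indicator {0..t} x *\<^sub>R \<rho> x = (0::real))} = {0..t}"
      using pos by (auto simp: indicator_def) (metis less_irrefl)
    ultimately have "emeasure lborel {0..t} = 0"
      using AE_iff_measurable[of "{0..t}" lborel] by auto
    then show False using t by simp
  qed
  then show ?thesis using nn by simp
qed

lemma I_meas: "Irho \<rho> \<in> borel_measurable (restrict_space lborel {0..})"
proof -
  have "mono_on {0..} (Irho \<rho>)" by (auto intro!: mono_onI I_mono)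
  then have "Irho \<rho> \<in> borel_measurable (restrict_space borel {0..})"
    by (rule borel_measurable_mono_on_fnc)
  moreover have "borel_measurable (restrict_space lborel {0..}) = borel_measurable (restrict_space (borel::real measure) {0..})"
    by (rule measurable_cong_sets) (auto simp: sets_restrict_space)
  ultimately show ?thesis by simp
qed

lemma I_pot_le: assumes "0 < t0" "t0 \<le> t" "r \<noteq> 1" "\<And>s. s \<in> {t0..t} \<Longrightarrow> \<rho> s \<le> C * (t/s) powr r"
  shows "Irho \<rho> t - Irho \<rho> t0 \<le> C * t powr r * ((t powr (1-r) - t0 powr (1-r)) / (1-r))"
proof -
  have hi: "((\<lambda>s. s powr (-r)) has_integral (t powr (-r+1) - t0 powr (-r+1)) / (-r+1)) {t0..t}"
    by (rule powr_int) (use assms in auto)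
  have "((\<lambda>s. (C * t powr r) * s powr (-r)) has_integral (C * t powr r) * ((t powr (-r+1) - t0 powr (-r+1)) / (-r+1))) {t0..t}"
    by (rule has_integral_mult_right[OF hi])
  moreover have "\<And>s. s \<in> {t0..t} \<Longrightarrow> (C * t powr r) * s powr (-r) = C * (t/s) powr r"
    using assms(1) by (auto simp: powr_divide powr_minus_divide)
  ultimately have hi2: "((\<lambda>s. C * (t/s) powr r) has_integral (C * t powr r) * ((t powr (1-r) - t0 powr (1-r)) / (1-r))) {t0..t}"
    by (subst has_integral_cong[symmetric]) (auto simp: add.commute)
  have "Irho \<rho> t - Irho \<rho> t0 \<le> integral {t0..t} (\<lambda>s. C * (t/s) powr r)"
    by (rule I_gen_le) (use assms has_integral_integrable[OF hi2] in auto)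
  also have "\<dots> = (C * t powr r) * ((t powr (1-r) - t0 powr (1-r)) / (1-r))"
    by (rule integral_unique[OF hi2])
  finally show ?thesis .
qed

lemma I_pot_ge: assumes "0 < t0" "t0 \<le> t" "r \<noteq> 1" "\<And>s. s \<in> {t0..t} \<Longrightarrow> C * (t/s) powr r \<le> \<rho> s"
  shows "C * t powr r * ((t powr (1-r) - t0 powr (1-r)) / (1-r)) \<le> Irho \<rho> t - Irho \<rho> t0"
proof -
  have hi: "((\<lambda>s. s powr (-r)) has_integral (t powr (-r+1) - t0 powr (-r+1)) / (-r+1)) {t0..t}"
    by (rule powr_int) (use assms in auto)
  have "((\<lambda>s. (C * t powr r) * s powr (-r)) has_integral (C * t powr r) * ((t powr (-r+1) - t0 powr (-r+1)) / (-r+1))) {t0..t}"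
    by (rule has_integral_mult_right[OF hi])
  moreover have "\<And>s. s \<in> {t0..t} \<Longrightarrow> (C * t powr r) * s powr (-r) = C * (t/s) powr r"
    using assms(1) by (auto simp: powr_divide powr_minus_divide)
  ultimately have hi2: "((\<lambda>s. C * (t/s) powr r) has_integral (C * t powr r) * ((t powr (1-r) - t0 powr (1-r)) / (1-r))) {t0..t}"
    by (subst has_integral_cong[symmetric]) (auto simp: add.commute)
  have "integral {t0..t} (\<lambda>s. C * (t/s) powr r) \<le> Irho \<rho> t - Irho \<rho> t0"
    by (rule I_gen_ge) (use assms has_integral_integrable[OF hi2] in auto)
  moreover have "integral {t0..t} (\<lambda>s. C * (t/s) powr r) = (C * t powr r) * ((t powr (1-r) - t0 powr (1-r)) / (1-r))"
    by (rule integral_unique[OF hi2])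
  ultimately show ?thesis by simp
qed

end


lemma powr_at_top':
  assumes "(p::real) > 0"
  shows   "filterlim (\<lambda>x. x powr p) at_top at_top"
proof (subst filterlim_cong[OF refl refl])
  show "LIM x at_top. exp (p * ln x) :> at_top"
    by (rule filterlim_compose[OF exp_at_top filterlim_tendsto_pos_mult_at_top[OF tendsto_const]])
       (simp_all add: ln_at_top assms)
  show "eventually (\<lambda>x. x powr p = exp (p * ln x)) at_top"
    using eventually_gt_at_top[of 0] by eventually_elim (simp add: powr_def)
qed

lemma ex_at_right: "eventually P (at_right (0::real)) \<Longrightarrow> \<exists>e>0. P e"
proof -
  assume "eventually P (at_right (0::real))"
  then obtain b where "b > 0" "\<And>y. y > 0 \<Longrightarrow> y < b \<Longrightarrow> P y"
    unfolding eventually_at_right_field by auto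
  then show ?thesis by (intro exI[of _ "b/2"]) auto
qed

lemma cmult_at_top: "(c::real) > 0 \<Longrightarrow> filterlim (\<lambda>t. c * t) at_top at_top"
  by (rule filterlim_tendsto_pos_mult_at_top[OF tendsto_const _ filterlim_ident])

context rv begin

lemma tr_inf: assumes a1: "\<alpha> < 1" shows "filterlim (\<lambda>t. t * \<rho> t) at_top at_top"
proof -
  define e where "e = (1 - \<alpha>) / 2"
  have e: "e > 0" using a1 by (simp add: e_def)
  obtain t0 where t0: "t0 > 0" and P: "\<And>s t. t0 \<le> s \<Longrightarrow> s \<le> t \<Longrightarrow>
     \<rho> s \<le> exp e * \<rho> t * (t/s) powr (\<alpha> + e)"
    using potter[OF e] by blast
  define \<beta> where "\<beta> = \<alpha> + e"
  have b1: "1 - \<beta> > 0" using a1 unfolding \<beta>_def e_def by (simp add: field_simps)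
  define c where "c = \<rho> t0 * exp (-e) * t0 powr \<beta>"
  have c: "c > 0" using pos[of t0] t0 by (simp add: c_def)
  have "filterlim (\<lambda>t. c * t powr (1 - \<beta>)) at_top at_top"
    by (rule filterlim_tendsto_pos_mult_at_top[OF tendsto_const c powr_at_top'[OF b1]])
  moreover have "eventually (\<lambda>t. c * t powr (1 - \<beta>) \<le> t * \<rho> t) at_top"
    using eventually_ge_at_top[of t0]
  proof eventually_elim
    case (elim t)
    have tp: "t > 0" using elim t0 by simp
    have "\<rho> t0 \<le> exp e * \<rho> t * (t / t0) powr \<beta>" using P[OF order.refl elim] by (simp add: \<beta>_def)
    also have "(t / t0) powr \<beta> = t powr \<beta> / t0 powr \<beta>" using tp t0 by (simp add: powr_divide)
    finally have "\<rho> t0 * exp (-e) * t0 powr \<beta> \<le> \<rho> t * t powr \<beta>"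
      using t0 by (simp add: exp_minus field_simps)
    then have "c * t powr (1 - \<beta>) \<le> \<rho> t * t powr \<beta> * t powr (1 - \<beta>)"
      unfolding c_def by (rule mult_right_mono) simp
    also have "\<dots> = t * \<rho> t" using tp by (simp add: mult.assoc powr_add[symmetric])
    finally show ?case .
  qed
  ultimately show ?thesis by (rule filterlim_at_top_mono)
qed

lemma ratio_lt1: assumes a1: "\<alpha> < 1"
  shows "((\<lambda>t. Irho \<rho> t / (t * \<rho> t)) \<longlongrightarrow> 1 / (1 - \<alpha>)) at_top"
proof (rule order_tendstoI)
  fix b assume b: "b > 1 / (1 - \<alpha>)"
  have "((\<lambda>e. exp e / (1 - \<alpha> - e)) \<longlongrightarrow> exp 0 / (1 - \<alpha> - 0)) (at_right 0)"
    using a1 by (intro tendsto_intros) auto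
  then have "eventually (\<lambda>e. exp e / (1 - \<alpha> - e) < b) (at_right 0)"
    using b by (intro order_tendstoD) auto
  moreover have "eventually (\<lambda>e. e < (1 - \<alpha>) / 2) (at_right (0::real))"
    unfolding eventually_at_right_field using a1 by (intro exI[of _ "(1-\<alpha>)/2"]) auto
  ultimately obtain e where e: "e > 0" and eb: "exp e / (1 - \<alpha> - e) < b" and e2: "e < (1 - \<alpha>) / 2"
    using ex_at_right[OF eventually_conj] by blast
  obtain t0 where t0: "t0 > 0" and P: "\<And>s t. t0 \<le> s \<Longrightarrow> s \<le> t \<Longrightarrow>
     \<rho> s \<le> exp e * \<rho> t * (t/s) powr (\<alpha> + e)"
    using potter[OF e] by blast
  define \<beta> where "\<beta> = \<alpha> + e"
  have b1: "1 - \<beta> > 0" using e2 e by (simp add: \<beta>_def)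
  have U: "((\<lambda>t. t0 * inverse (t * \<rho> t) + exp e / (1 - \<beta>)) \<longlongrightarrow> t0 * 0 + exp e / (1 - \<beta>)) at_top"
    by (intro tendsto_intros tendsto_inverse_0_at_top tr_inf a1)
  have "eventually (\<lambda>t. t0 * inverse (t * \<rho> t) + exp e / (1 - \<beta>) < b) at_top"
    using order_tendstoD(2)[OF U] eb by (simp add: \<beta>_def diff_diff_eq)
  moreover have "eventually (\<lambda>t. Irho \<rho> t / (t * \<rho> t) \<le> t0 * inverse (t * \<rho> t) + exp e / (1 - \<beta>)) at_top"
    using eventually_ge_at_top[of t0]
  proof eventually_elim
    case (elim t)
    have tp: "t > 0" using elim t0 by simp
    have rt: "\<rho> t > 0" using pos tp by simp
    have "Irho \<rho> t - Irho \<rho> t0 \<le> exp e * \<rho> t * t powr \<beta> * ((t powr (1-\<beta>) - t0 powr (1-\<beta>)) / (1-\<beta>))"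
      by (rule I_pot_le) (use t0 elim b1 P in \<open>auto simp: \<beta>_def\<close>)
    also have "\<dots> \<le> exp e * \<rho> t * t powr \<beta> * (t powr (1-\<beta>) / (1-\<beta>))"
      using b1 rt t0 by (intro mult_left_mono divide_right_mono) auto
    also have "\<dots> = exp e * (t * \<rho> t) / (1 - \<beta>)"
      using tp by (simp add: mult.assoc powr_add[symmetric] mult.commute mult.left_commute)
    finally have "Irho \<rho> t \<le> t0 + exp e * (t * \<rho> t) / (1 - \<beta>)"
      using I_le_t[of t0] t0 by simp
    then show ?case using tp rt by (simp add: field_simps)
  qed
  ultimately show "eventually (\<lambda>t. Irho \<rho> t / (t * \<rho> t) < b) at_top"
    by eventually_elim simp
next
  fix a assume a: "a < 1 / (1 - \<alpha>)"
  have "((\<lambda>e. exp (-e) / (1 - \<alpha> + e)) \<longlongrightarrow> exp (-0) / (1 - \<alpha> + 0)) (at_right 0)"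
    using a1 by (intro tendsto_intros) auto
  then have "eventually (\<lambda>e. a < exp (-e) / (1 - \<alpha> + e)) (at_right 0)"
    using a by (intro order_tendstoD) auto
  then obtain e where e: "e > 0" and ea: "a < exp (-e) / (1 - \<alpha> + e)"
    using ex_at_right by blast
  obtain t0 where t0: "t0 > 0" and P: "\<And>s t. t0 \<le> s \<Longrightarrow> s \<le> t \<Longrightarrow>
     exp (-e) * \<rho> t * (t/s) powr (\<alpha> - e) \<le> \<rho> s"
    using potter[OF e] by blast
  define r where "r = \<alpha> - e"
  have r1: "1 - r > 0" using a1 e by (simp add: r_def)
  have V: "((\<lambda>t. exp (-e) * (1 - t0 powr (1 - r) * t powr (r - 1)) / (1 - r)) \<longlongrightarrow> exp (-e) * (1 - t0 powr (1 - r) * 0) / (1 - r)) at_top"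
    using r1 by (intro tendsto_intros tendsto_neg_powr filterlim_ident) auto
  have "eventually (\<lambda>t. a < exp (-e) * (1 - t0 powr (1 - r) * t powr (r - 1)) / (1 - r)) at_top"
  proof -
    have "1 - r = 1 - \<alpha> + e" by (simp add: r_def)
    then have ea': "a < exp (-e) * (1 - t0 powr (1 - r) * 0) / (1 - r)" using ea by (simp only: mult_zero_right diff_zero mult_1_right)
    show ?thesis by (rule order_tendstoD(1)[OF V ea'])
  qed
  moreover have "eventually (\<lambda>t. exp (-e) * (1 - t0 powr (1 - r) * t powr (r - 1)) / (1 - r) \<le> Irho \<rho> t / (t * \<rho> t)) at_top"
    using eventually_ge_at_top[of t0]
  proof eventually_elim
    case (elim t)
    have tp: "t > 0" using elim t0 by simp
    have rt: "\<rho> t > 0" using pos tp by simp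
    have "exp (-e) * \<rho> t * t powr r * ((t powr (1-r) - t0 powr (1-r)) / (1-r)) \<le> Irho \<rho> t - Irho \<rho> t0"
      by (rule I_pot_ge) (use t0 elim r1 P in \<open>auto simp: r_def\<close>)
    also have "\<dots> \<le> Irho \<rho> t" using I_nonneg[of t0] t0 by simp
    also have "exp (-e) * \<rho> t * t powr r * ((t powr (1-r) - t0 powr (1-r)) / (1-r))
        = (t * \<rho> t) * (exp (-e) * (1 - t0 powr (1 - r) * t powr (r - 1)) / (1 - r))"
    proof -
      have "t powr r * t powr (1 - r) = t" using tp by (simp add: powr_add[symmetric])
      moreover have "t powr r = t * t powr (r - 1)"
      proof -
        have h1: "t powr (1 + (r - 1)) = t powr 1 * t powr (r - 1)" by (rule powr_add)
        have h3: "1 + (r - 1) = r" by simp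
        have h2: "t powr 1 = t" using tp by simp
        from h1 h2 h3 show ?thesis by metis
      qed
      ultimately show ?thesis using r1 by (simp add: field_simps) blast
    qed
    finally show ?case using tp rt by (simp add: field_simps)
  qed
  ultimately show "eventually (\<lambda>t. a < Irho \<rho> t / (t * \<rho> t)) at_top"
    by eventually_elim simp
qed

end


context rv begin

lemma ratio_ge1: assumes a1: "\<alpha> \<ge> 1"
  shows "filterlim (\<lambda>t. Irho \<rho> t / (t * \<rho> t)) at_top at_top"
proof (subst filterlim_at_top, intro allI)
  fix Z :: real
  define e where "e = min (1/2) (1 / (4 * (\<bar>Z\<bar> + 1)))"
  have e: "e > 0" "e \<le> 1/2" "e \<le> 1 / (4 * (\<bar>Z\<bar> + 1))" by (auto simp: e_def)
  obtain t0 where t0: "t0 > 0" and P: "\<And>s t. t0 \<le> s \<Longrightarrow> s \<le> t \<Longrightarrow>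
     exp (-e) * \<rho> t * (t/s) powr (\<alpha> - e) \<le> \<rho> s"
    using potter[OF e(1)] by blast
  define r where "r = 1 - e"
  have r1: "r \<noteq> 1" using e by (simp add: r_def)
  have "((\<lambda>t. t0 powr e * t powr (- e)) \<longlongrightarrow> t0 powr e * 0) at_top"
    using e by (intro tendsto_intros tendsto_neg_powr filterlim_ident) auto
  then have ev: "eventually (\<lambda>t. t0 powr e * t powr (- e) < 1/2) at_top"
    by (intro order_tendstoD) auto
  show "eventually (\<lambda>t. Z \<le> Irho \<rho> t / (t * \<rho> t)) at_top"
    using ev eventually_ge_at_top[of t0]
  proof eventually_elim
    case (elim t)
    have tp: "t > 0" using elim t0 by simp
    have rt: "\<rho> t > 0" using pos tp by simp
    have bnd: "exp (-e) * \<rho> t * (t/s) powr r \<le> \<rho> s" if s: "s \<in> {t0..t}" for s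
    proof -
      have sp: "s > 0" using s t0 by simp
      have "(t/s) powr r \<le> (t/s) powr (\<alpha> - e)"
        using s sp a1 by (intro powr_mono) (auto simp: r_def field_simps)
      then have "exp (-e) * \<rho> t * (t/s) powr r \<le> exp (-e) * \<rho> t * (t/s) powr (\<alpha> - e)"
        using rt by (intro mult_left_mono) auto
      also have "\<dots> \<le> \<rho> s" using P s by auto
      finally show ?thesis .
    qed
    have "exp (-e) * \<rho> t * t powr r * ((t powr (1-r) - t0 powr (1-r)) / (1-r)) \<le> Irho \<rho> t - Irho \<rho> t0"
      by (rule I_pot_ge) (use t0 elim r1 bnd in auto)
    also have "\<dots> \<le> Irho \<rho> t" using I_nonneg[of t0] t0 by simp
    also have "exp (-e) * \<rho> t * t powr r * ((t powr (1-r) - t0 powr (1-r)) / (1-r))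
        = (t * \<rho> t) * (exp (-e) * (1 - t0 powr e * t powr (- e)) / e)"
    proof -
      have h1: "t powr (r + e) = t powr r * t powr e" by (rule powr_add)
      have "r + e = 1" by (simp add: r_def)
      then have h2: "t powr r * t powr e = t" using h1 tp by simp
      have h3: "t powr e * t powr (- e) = 1" using tp by (simp add: powr_minus)
      have "1 - r = e" by (simp add: r_def)
      have h4: "t powr r = t * t powr (- e)"
      proof -
        have "t powr r = t powr r * (t powr e * t powr (- e))" using h3 by simp
        also have "\<dots> = t * t powr (- e)" using h2 by (simp only: mult.assoc[symmetric])
        finally show ?thesis .
      qed
      have h5: "t powr r * (t powr e - t0 powr e) = t * (1 - t0 powr e * t powr (- e))"
        using h2 h4 by (simp add: algebra_simps)
      show ?thesis unfolding \<open>1 - r = e\<close> using h5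
        by (simp add: mult.assoc)
    qed
    finally have A: "(t * \<rho> t) * (exp (-e) * (1 - t0 powr e * t powr (- e)) / e) \<le> Irho \<rho> t" .
    have "1 - e \<le> exp (-e)" using exp_ge_add_one_self[of "-e"] by simp
    then have ex: "exp (-e) \<ge> 1/2" using e by simp
    have "Z \<le> 1 / (4 * e)"
    proof -
      have "4 * e * (\<bar>Z\<bar> + 1) \<le> 1" using e(3) by (simp add: field_simps)
      then have "\<bar>Z\<bar> + 1 \<le> 1 / (4 * e)" using e by (simp add: field_simps)
      then show ?thesis by linarith
    qed
    also have "1 / (4 * e) \<le> exp (-e) * (1 - t0 powr e * t powr (- e)) / e"
    proof -
      have "1/2 * (1/2) \<le> exp (-e) * (1 - t0 powr e * t powr (- e))"
        using ex elim(1) by (intro mult_mono) auto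
      then show ?thesis using e by (simp add: field_simps)
    qed
    also have "\<dots> \<le> Irho \<rho> t / (t * \<rho> t)"
      using A tp rt by (simp add: field_simps)
    finally show ?case .
  qed
qed

lemma rv_I_ge1: assumes a1: "\<alpha> \<ge> 1" and c: "c \<ge> 1"
  shows "((\<lambda>t. Irho \<rho> (c * t) / Irho \<rho> t) \<longlongrightarrow> 1) at_top"
proof -
  obtain t0 where t0: "t0 > 0" and P: "\<And>s t. t0 \<le> s \<Longrightarrow> s \<le> t \<Longrightarrow>
     exp (-(1/2)) * \<rho> t * (t/s) powr (\<alpha> - 1/2) \<le> \<rho> s"
    using potter[of "1/2"] by auto
  have L: "((\<lambda>t. 1 + exp (1/2) * (c - 1) * inverse (Irho \<rho> t / (t * \<rho> t))) \<longlongrightarrow> 1 + exp (1/2) * (c - 1) * 0) at_top"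
    by (intro tendsto_intros tendsto_inverse_0_at_top ratio_ge1 a1)
  show ?thesis
  proof (rule tendsto_sandwich[OF _ _ tendsto_const])
    show "((\<lambda>t. 1 + exp (1/2) * (c - 1) * inverse (Irho \<rho> t / (t * \<rho> t))) \<longlongrightarrow> 1) at_top"
      using L by simp
    show "eventually (\<lambda>t. 1 \<le> Irho \<rho> (c * t) / Irho \<rho> t) at_top"
      using eventually_gt_at_top[of 0]
    proof eventually_elim
      case (elim t)
      have "Irho \<rho> t \<le> Irho \<rho> (c * t)" using elim c by (intro I_mono) auto
      then show ?case using I_pos[OF elim] by simp
    qed
    show "eventually (\<lambda>t. Irho \<rho> (c * t) / Irho \<rho> t \<le> 1 + exp (1/2) * (c - 1) * inverse (Irho \<rho> t / (t * \<rho> t))) at_top"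
      using eventually_ge_at_top[of t0]
    proof eventually_elim
      case (elim t)
      have tp: "t > 0" using elim t0 by simp
      have rt: "\<rho> t > 0" using pos tp by simp
      have It: "Irho \<rho> t > 0" using I_pos[OF tp] .
      have "\<rho> x \<le> exp (1/2) * \<rho> t" if x: "x \<in> {t..c*t}" for x
      proof -
        have "1 \<le> (x/t) powr (\<alpha> - 1/2)" using x tp a1 by (intro ge_one_powr_ge_zero) auto
        then have "exp (-(1/2)) * \<rho> x * 1 \<le> exp (-(1/2)) * \<rho> x * (x/t) powr (\<alpha> - 1/2)"
          using pos[of x] x tp by (intro mult_left_mono) auto
        also have "\<dots> \<le> \<rho> t" using P[of t x] elim x by auto
        finally show ?thesis by (simp add: exp_minus field_simps)
      qed
      then have "Irho \<rho> (c*t) - Irho \<rho> t \<le> exp (1/2) * \<rho> t * (c * t - t)"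
        using tp c by (intro I_le) auto
      then have "Irho \<rho> (c*t) \<le> Irho \<rho> t + exp (1/2) * (c - 1) * (t * \<rho> t)"
        by (simp add: algebra_simps)
      then show ?case using It tp rt by (simp add: field_simps)
    qed
  qed
qed

lemma rv_I_lim: assumes c: "c > 0"
  shows "((\<lambda>t. Irho \<rho> (c * t) / Irho \<rho> t) \<longlongrightarrow> c powr max (1 - \<alpha>) 0) at_top"
proof (cases "\<alpha> < 1")
  case True
  define L where "L = 1 / (1 - \<alpha>)"
  have L: "L > 0" using True by (simp add: L_def)
  define f where "f = (\<lambda>t. Irho \<rho> t / (t * \<rho> t))"
  have f: "(f \<longlongrightarrow> L) at_top" unfolding f_def L_def by (rule ratio_lt1[OF True])
  have fc: "((\<lambda>t. f (c * t)) \<longlongrightarrow> L) at_top" by (rule filterlim_compose[OF f cmult_at_top[OF c]])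
  have "((\<lambda>t. f (c * t) * c * (\<rho> (c * t) / \<rho> t) / f t) \<longlongrightarrow> L * c * c powr (- \<alpha>) / L) at_top"
    using L by (intro tendsto_intros fc f lim c) auto
  moreover have "L * c * c powr (- \<alpha>) / L = c powr max (1 - \<alpha>) 0"
    using L c True by (simp add: powr_add[symmetric] powr_minus) (simp add: powr_diff field_simps)
  moreover have "eventually (\<lambda>t. f (c * t) * c * (\<rho> (c * t) / \<rho> t) / f t = Irho \<rho> (c * t) / Irho \<rho> t) at_top"
    using eventually_gt_at_top[of 0]
  proof eventually_elim
    case (elim t)
    have "\<rho> t > 0" "\<rho> (c*t) > 0" "Irho \<rho> t > 0" "Irho \<rho> (c*t) > 0"
      using pos I_pos elim c by auto
    then show ?case using elim c unfolding f_def by (simp add: field_simps)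
  qed
  ultimately show ?thesis by (auto intro: Lim_transform_eventually)
next
  case False
  then have a1: "\<alpha> \<ge> 1" by simp
  have m: "c powr max (1 - \<alpha>) 0 = 1" using a1 c by simp
  show ?thesis
  proof (cases "c \<ge> 1")
    case True then show ?thesis using rv_I_ge1[OF a1 True] m by simp
  next
    case False
    have c1: "1 / c \<ge> 1" using False c by simp
    have G: "((\<lambda>t. Irho \<rho> (1/c * (c * t)) / Irho \<rho> (c * t)) \<longlongrightarrow> 1) at_top"
      by (rule filterlim_compose[OF rv_I_ge1[OF a1 c1] cmult_at_top[OF c]])
    have "((\<lambda>t. inverse (Irho \<rho> (1/c * (c * t)) / Irho \<rho> (c * t))) \<longlongrightarrow> inverse 1) at_top"
      by (intro tendsto_intros G) auto
    then show ?thesis using c m by simp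
  qed
qed

lemma rv_I: "regularly_varying (max (1 - \<alpha>) 0) (Irho \<rho>)"
  unfolding regularly_varying_def using I_meas I_pos rv_I_lim by auto

end


context rv begin

lemma term_bnd0: assumes t0: "t0 > 0" and P: "\<And>s t. t0 \<le> s \<Longrightarrow> s \<le> t \<Longrightarrow> t \<le> 2 * s \<Longrightarrow> \<rho> t \<le> exp 1 * \<rho> s"
  and M: "M \<ge> 2 * t0" and l: "l \<ge> (1::nat)"
  shows "M * \<rho> (real l * M) \<le> 2 * exp 1 * (Irho \<rho> (real l * M) - Irho \<rho> (real l * M - M/2))"
proof -
  have Mp: "M > 0" using M t0 by simp
  have lr: "real l \<ge> 1" using l by simp
  have "\<rho> (real l * M) / exp 1 \<le> \<rho> x" if x: "x \<in> {real l * M - M/2 .. real l * M}" for x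
  proof -
    have lM: "real l * M \<ge> M" using mult_right_mono[OF lr, of M] Mp by simp
    have "t0 \<le> x" using x lM M by auto
    moreover have "real l * M \<le> 2 * x" using x lM by auto
    ultimately have "\<rho> (real l * M) \<le> exp 1 * \<rho> x" using P x by auto
    then show ?thesis by (simp add: field_simps)
  qed
  note low = this
  have "\<rho> (real l * M) / exp 1 * (real l * M - (real l * M - M/2)) \<le> Irho \<rho> (real l * M) - Irho \<rho> (real l * M - M/2)"
  proof (rule I_ge)
    have "real l * M \<ge> M" using mult_right_mono[OF lr, of M] Mp by simp
    then show "0 \<le> real l * M - M / 2" "real l * M - M / 2 \<le> real l * M" using Mp by auto
  qed (use low in auto)
  then show ?thesis by (simp add: field_simps)
qed

lemma term_bnd: assumes t0: "t0 > 0" and P: "\<And>s t. t0 \<le> s \<Longrightarrow> s \<le> t \<Longrightarrow> t \<le> 2 * s \<Longrightarrow> \<rho> t \<le> exp 1 * \<rho> s"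
  and M: "M \<ge> 2 * t0" and l: "l \<ge> (1::nat)"
  shows "M * \<rho> (real l * M) \<le> 2 * exp 1 * (Irho \<rho> (real l * M) - Irho \<rho> (real (l - 1) * M))"
proof -
  have Mp: "M > 0" using M t0 by simp
  have lr: "real l \<ge> 1" using l by simp
  have "\<rho> (real l * M) / exp 1 \<le> \<rho> x" if x: "x \<in> {real l * M - M/2 .. real l * M}" for x
  proof -
    have lM: "real l * M \<ge> M" using mult_right_mono[OF lr, of M] Mp by simp
    have "t0 \<le> x" using x lM M by auto
    moreover have "real l * M \<le> 2 * x" using x lM by auto
    ultimately have "\<rho> (real l * M) \<le> exp 1 * \<rho> x" using P x by auto
    then show ?thesis by (simp add: field_simps)
  qed
  note low = this
  have "\<rho> (real l * M) / exp 1 * (real l * M - (real l * M - M/2)) \<le> Irho \<rho> (real l * M) - Irho \<rho> (real l * M - M/2)"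
  proof (rule I_ge)
    have "real l * M \<ge> M" using mult_right_mono[OF lr, of M] Mp by simp
    then show "0 \<le> real l * M - M / 2" "real l * M - M / 2 \<le> real l * M" using Mp by auto
  qed (use low in auto)
  also have "\<dots> \<le> Irho \<rho> (real l * M) - Irho \<rho> (real (l - 1) * M)"
  proof -
    have "real (l - 1) * M \<le> real l * M - M/2" using l Mp by (simp add: of_nat_diff algebra_simps)
    moreover have "0 \<le> real (l - 1) * M" using Mp by simp
    ultimately show ?thesis using I_mono by (smt (verit))
  qed
  finally show ?thesis by (simp add: field_simps)
qed

lemma psum: assumes t0: "t0 > 0" and P: "\<And>s t. t0 \<le> s \<Longrightarrow> s \<le> t \<Longrightarrow> t \<le> 2 * s \<Longrightarrow> \<rho> t \<le> exp 1 * \<rho> s"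
  and M: "M \<ge> 2 * t0" and n: "n \<ge> (1::nat)"
  shows "M * (\<Sum>l=1..n. \<rho> (real l * M)) \<le> 2 * exp 1 * (Irho \<rho> (real n * M) - Irho \<rho> (M/2))"
  using n
proof (induction n rule: dec_induct)
  case base
  have "M * \<rho> (real 1 * M) \<le> 2 * exp 1 * (Irho \<rho> (real 1 * M) - Irho \<rho> (real 1 * M - M/2))"
    by (rule term_bnd0[OF t0 P M]) auto
  then show ?case by simp
next
  case (step n)
  have "M * \<rho> (real (Suc n) * M) \<le> 2 * exp 1 * (Irho \<rho> (real (Suc n) * M) - Irho \<rho> (real (Suc n - 1) * M))"
    by (rule term_bnd[OF t0 P M]) auto
  then have "M * \<rho> (real (Suc n) * M) \<le> 2 * exp 1 * (Irho \<rho> (real (Suc n) * M) - Irho \<rho> (real n * M))"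
    by simp
  then show ?case using step(3) by (simp add: algebra_simps)
qed

lemma a2: "Limsup (sequentially \<times>\<^sub>F at_top)
           (\<lambda>(n::nat, M::real). ereal (M * (\<Sum>l=1..n. \<rho> (real l * M)) / Irho \<rho> (real n * M))) < \<infinity>"
proof -
  obtain t0 where t0: "t0 > 0" and P: "\<And>s t. t0 \<le> s \<Longrightarrow> s \<le> t \<Longrightarrow> t \<le> 2 * s \<Longrightarrow> \<rho> t \<le> exp 1 * \<rho> s"
    using loc[of 1] by auto
  have "eventually (\<lambda>x. (\<lambda>(n::nat, M::real). ereal (M * (\<Sum>l=1..n. \<rho> (real l * M)) / Irho \<rho> (real n * M))) x \<le> ereal (2 * exp 1))
     (sequentially \<times>\<^sub>F at_top)"
  proof -
    have key: "M * (\<Sum>l=1..n. \<rho> (real l * M)) / Irho \<rho> (real n * M) \<le> 2 * exp 1"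
      if n: "n \<ge> 1" and M: "M \<ge> 2 * t0" for n :: nat and M :: real
    proof -
      have Mp: "M > 0" using M t0 by simp
      have nM: "real n * M > 0" using n Mp by simp
      have Ip: "Irho \<rho> (real n * M) > 0" using I_pos[OF nM] .
      have "M * (\<Sum>l=1..n. \<rho> (real l * M)) \<le> 2 * exp 1 * (Irho \<rho> (real n * M) - Irho \<rho> (M/2))"
        by (rule psum[OF t0 P M n])
      also have "\<dots> \<le> 2 * exp 1 * Irho \<rho> (real n * M)"
        using I_nonneg[of "M/2"] Mp by simp
      finally show ?thesis using Ip by (simp add: field_simps)
    qed
    show ?thesis unfolding eventually_prod_filter
      by (intro exI[of _ "\<lambda>n::nat. n \<ge> 1"] exI[of _ "\<lambda>M::real. M \<ge> 2 * t0"] conjI eventually_ge_at_top)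
         (auto intro: key[unfolded One_nat_def])
  qed
  then have "Limsup (sequentially \<times>\<^sub>F at_top)
           (\<lambda>(n::nat, M::real). ereal (M * (\<Sum>l=1..n. \<rho> (real l * M)) / Irho \<rho> (real n * M))) \<le> ereal (2 * exp 1)"
    by (rule Limsup_bounded)
  then show ?thesis by (auto simp: le_less_trans)
qed

end


context rv begin

lemma I_le_inf: assumes t: "t \<ge> 0" shows "ennreal (Irho \<rho> t) \<le> Irho_inf \<rho>"
proof -
  have int: "integrable lborel (\<lambda>x. indicator {0..t} x *\<^sub>R \<rho> x)"
    using sint[of 0 t] by (simp add: set_integrable_def)
  have "ennreal (Irho \<rho> t) = (\<integral>\<^sup>+ x. ennreal (indicator {0..t} x *\<^sub>R \<rho> x) \<partial>lborel)"
    unfolding Irho_def set_lebesgue_integral_def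
    by (rule nn_integral_eq_integral[OF int, symmetric])
       (use pos in \<open>auto intro!: AE_I2 simp: indicator_def less_imp_le\<close>)
  also have "\<dots> \<le> (\<integral>\<^sup>+ x. indicator {0..} x * ennreal (\<rho> x) \<partial>lborel)"
    by (rule nn_integral_mono) (auto simp: indicator_def)
  finally show ?thesis by (simp add: Irho_def Irho_inf_def)
qed

lemma a3: assumes fin: "Irho_inf \<rho> < \<infinity>"
  shows "Limsup at_top (\<lambda>M::real. ennreal M * (\<Sum>l. ennreal (\<rho> (real (Suc l) * M)))) = 0"
proof -
  define B where "B = enn2real (Irho_inf \<rho>)"
  have IB: "Irho \<rho> t \<le> B" if "t \<ge> 0" for t
  proof -
    have "enn2real (ennreal (Irho \<rho> t)) \<le> enn2real (Irho_inf \<rho>)"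
      using I_le_inf[OF that] fin by (intro enn2real_mono) auto
    then show ?thesis using I_nonneg[OF that] by (simp add: B_def)
  qed
  define S where "S = (SUP t\<in>{0..}. Irho \<rho> t)"
  have bdd: "bdd_above (Irho \<rho> ` {0..})" using IB by (auto intro!: bdd_aboveI)
  have IS: "Irho \<rho> t \<le> S" if "t \<ge> 0" for t
    unfolding S_def using bdd that by (intro cSUP_upper) auto
  obtain t0 where t0: "t0 > 0" and P: "\<And>s t. t0 \<le> s \<Longrightarrow> s \<le> t \<Longrightarrow> t \<le> 2 * s \<Longrightarrow> \<rho> t \<le> exp 1 * \<rho> s"
    using loc[of 1] by auto
  have "Limsup at_top (\<lambda>M::real. ennreal M * (\<Sum>l. ennreal (\<rho> (real (Suc l) * M)))) \<le> 0"
  proof (rule ennreal_le_epsilon)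
    fix \<epsilon> :: real assume \<epsilon>: "\<epsilon> > 0"
    define \<epsilon>' where "\<epsilon>' = \<epsilon> / (2 * exp 1)"
    have \<epsilon>': "\<epsilon>' > 0" using \<epsilon> by (simp add: \<epsilon>'_def)
    have "S - \<epsilon>' < S" using \<epsilon>' by simp
    then obtain t1 where t1: "t1 \<in> {0..}" and t1S: "S - \<epsilon>' < Irho \<rho> t1"
      unfolding S_def using less_cSUP_iff[OF _ bdd] by auto
    have "eventually (\<lambda>M::real. ennreal M * (\<Sum>l. ennreal (\<rho> (real (Suc l) * M))) \<le> 0 + ennreal \<epsilon>) at_top"
      using eventually_ge_at_top[of "max (2 * t0) (2 * t1)"]
    proof eventually_elim
      case (elim M)
      have M: "M \<ge> 2 * t0" and M1: "M / 2 \<ge> t1" using elim by auto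
      have Mp: "M > 0" using M t0 by simp
      have part: "ennreal M * (\<Sum>i<n. ennreal (\<rho> (real (Suc i) * M))) \<le> ennreal \<epsilon>" for n
      proof (cases "n = 0")
        case True then show ?thesis by simp
      next
        case False
        then have n: "n \<ge> 1" by simp
        have "(\<Sum>i<n. \<rho> (real (Suc i) * M)) = (\<Sum>l=1..n. \<rho> (real l * M))"
          by (simp add: sum.atLeast1_atMost_eq)
        moreover have "M * (\<Sum>l=1..n. \<rho> (real l * M)) \<le> 2 * exp 1 * (Irho \<rho> (real n * M) - Irho \<rho> (M/2))"
          by (rule psum[OF t0 P M n])
        moreover have "Irho \<rho> (real n * M) \<le> S" using IS Mp by simp
        moreover have "Irho \<rho> t1 \<le> Irho \<rho> (M/2)" using I_mono t1 M1 by simp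
        ultimately have "M * (\<Sum>i<n. \<rho> (real (Suc i) * M)) \<le> 2 * exp 1 * \<epsilon>'"
          using t1S by (smt (verit) exp_gt_zero mult_left_mono)
        also have "\<dots> = \<epsilon>" by (simp add: \<epsilon>'_def)
        finally have "M * (\<Sum>i<n. \<rho> (real (Suc i) * M)) \<le> \<epsilon>" .
        moreover have "ennreal M * (\<Sum>i<n. ennreal (\<rho> (real (Suc i) * M))) = ennreal (M * (\<Sum>i<n. \<rho> (real (Suc i) * M)))"
          using Mp pos by (simp add: ennreal_mult less_imp_le sum_nonneg)
        ultimately show ?thesis by (simp add: ennreal_leI)
      qed
      have "ennreal M * (\<Sum>l. ennreal (\<rho> (real (Suc l) * M))) = (\<Sum>l. ennreal M * ennreal (\<rho> (real (Suc l) * M)))"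
        by simp
      also have "\<dots> = (SUP n. \<Sum>i<n. ennreal M * ennreal (\<rho> (real (Suc i) * M)))"
        by (rule suminf_eq_SUP)
      also have "\<dots> \<le> ennreal \<epsilon>"
        using part by (intro SUP_least) (simp add: sum_distrib_left)
      finally show ?case by simp
    qed
    then show "Limsup at_top (\<lambda>M::real. ennreal M * (\<Sum>l. ennreal (\<rho> (real (Suc l) * M)))) \<le> 0 + ennreal \<epsilon>"
      by (rule Limsup_bounded)
  qed
  then show ?thesis by (simp add: le_zero_eq)
qed

end


context rv begin

lemma rho_0: assumes "\<alpha> > 0" shows "(\<rho> \<longlongrightarrow> 0) at_top"
proof -
  define e where "e = \<alpha> / 2"
  have e: "e > 0" using assms by (simp add: e_def)
  obtain t0 where t0: "t0 > 0" and P: "\<And>s t. t0 \<le> s \<Longrightarrow> s \<le> t \<Longrightarrow>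
     exp (-e) * \<rho> t * (t/s) powr (\<alpha> - e) \<le> \<rho> s"
    using potter[OF e] by blast
  have ft: "filterlim (\<lambda>t. t / t0) at_top at_top"
    using filterlim_tendsto_pos_mult_at_top[OF tendsto_const[of "1/t0"] _ filterlim_ident] t0 by simp
  have lim: "((\<lambda>t. exp e * \<rho> t0 * (t / t0) powr (- (\<alpha> - e))) \<longlongrightarrow> exp e * \<rho> t0 * 0) at_top"
    using e t0 by (intro tendsto_intros tendsto_neg_powr ft) (auto simp: e_def)
  show ?thesis
  proof (rule tendsto_sandwich[OF _ _ tendsto_const])
    show "eventually (\<lambda>t. 0 \<le> \<rho> t) at_top"
      using eventually_ge_at_top[of 0] by eventually_elim (simp add: pos less_imp_le)
    show "eventually (\<lambda>t. \<rho> t \<le> exp e * \<rho> t0 * (t / t0) powr (- (\<alpha> - e))) at_top"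
      using eventually_ge_at_top[of t0]
    proof eventually_elim
      case (elim t)
      have tp: "t > 0" using elim t0 by simp
      have q: "(t/t0) powr (\<alpha> - e) > 0" using tp t0 by simp
      have "exp (-e) * \<rho> t * (t/t0) powr (\<alpha> - e) \<le> \<rho> t0" using P[OF order.refl elim] .
      then have "\<rho> t \<le> \<rho> t0 * exp e / (t/t0) powr (\<alpha> - e)"
        using q by (simp add: field_simps exp_minus)
      moreover have pm: "(t/t0) powr (- (\<alpha> - e)) = inverse ((t/t0) powr (\<alpha> - e))" by (rule powr_minus)
      have "\<rho> t0 * exp e / (t/t0) powr (\<alpha> - e) = exp e * \<rho> t0 * inverse ((t/t0) powr (\<alpha> - e))"
        by (simp add: field_simps)
      ultimately show ?case unfolding pm by linarith
    qed
    show "((\<lambda>t. exp e * \<rho> t0 * (t / t0) powr (- (\<alpha> - e))) \<longlongrightarrow> 0) at_top" using lim by simp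
  qed
qed

lemma I_x_0: assumes r0: "(\<rho> \<longlongrightarrow> 0) at_top" shows "((\<lambda>x. Irho \<rho> x / x) \<longlongrightarrow> 0) at_top"
proof (rule order_tendstoI)
  fix a :: real assume a: "a < 0"
  show "eventually (\<lambda>x. a < Irho \<rho> x / x) at_top"
    using eventually_ge_at_top[of 1]
  proof eventually_elim
    case (elim x)
    then have "0 \<le> Irho \<rho> x / x" using I_nonneg[of x] by simp
    then show ?case using a by simp
  qed
next
  fix b :: real assume b: "b > 0"
  have "eventually (\<lambda>x. \<rho> x < b/2) at_top" by (rule order_tendstoD(2)[OF r0]) (use b in simp)
  then obtain x1 where x1: "\<And>x. x \<ge> x1 \<Longrightarrow> \<rho> x < b/2" by (auto simp: eventually_at_top_linorder)
  define x2 where "x2 = max x1 0"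
  have x2: "x2 \<ge> 0" "\<And>x. x \<ge> x2 \<Longrightarrow> \<rho> x \<le> b/2" using x1 by (auto simp: x2_def less_imp_le)
  show "eventually (\<lambda>x. Irho \<rho> x / x < b) at_top"
    using eventually_gt_at_top[of "2 * x2 / b + x2 + 1"]
  proof eventually_elim
    case (elim x)
    have "2 * x2 / b \<ge> 0" using x2 b by simp
    then have xx2: "x \<ge> x2" and xp: "x > 0" using elim x2 by linarith+
    have "Irho \<rho> x - Irho \<rho> x2 \<le> b/2 * (x - x2)" using x2 xx2 by (intro I_le) auto
    moreover have "Irho \<rho> x2 \<le> x2" using I_le_t x2 by simp
    moreover have "b/2 * (x - x2) = b/2 * x - b/2 * x2" by (simp add: right_diff_distrib)
    moreover have "b/2 * x2 \<ge> 0" using b x2 by simp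
    ultimately have "Irho \<rho> x \<le> x2 + b/2 * x" by linarith
    moreover have "x2 < b/2 * x"
    proof -
      have "2 * x2 / b < x" using elim x2 by linarith
      then show ?thesis using b by (simp add: field_simps)
    qed
    ultimately have "Irho \<rho> x < b * x" by linarith
    then show ?case using xp by (simp add: field_simps)
  qed
qed

lemma I_inf_lt1: assumes a1: "\<alpha> < 1" shows "filterlim (Irho \<rho>) at_top at_top"
proof -
  have lim: "filterlim (\<lambda>t. (Irho \<rho> t / (t * \<rho> t)) * (t * \<rho> t)) at_top at_top"
    by (rule filterlim_tendsto_pos_mult_at_top[OF ratio_lt1[OF a1] _ tr_inf[OF a1]]) (use a1 in simp)
  have ev: "eventually (\<lambda>t. (Irho \<rho> t / (t * \<rho> t)) * (t * \<rho> t) = Irho \<rho> t) at_top"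
    using eventually_gt_at_top[of 0]
  proof eventually_elim
    case (elim t) then have nz: "t * \<rho> t \<noteq> 0" using pos[of t] by simp
    have "Irho \<rho> t / (t * \<rho> t) * (t * \<rho> t) = Irho \<rho> t * (t * \<rho> t) / (t * \<rho> t)"
      by (rule times_divide_eq_left)
    also have "\<dots> = Irho \<rho> t" using nz by (rule nonzero_mult_div_cancel_right)
    finally show ?case .
  qed
  show ?thesis using filterlim_cong[OF refl refl ev] lim by simp
qed

lemma I_eq_nn: assumes t: "t \<ge> 0"
  shows "(\<integral>\<^sup>+ x. ennreal (indicator {0..t} x *\<^sub>R \<rho> x) \<partial>lborel) = ennreal (Irho \<rho> t)"
proof -
  have int: "integrable lborel (\<lambda>x. indicator {0..t} x *\<^sub>R \<rho> x)"
    using sint[of 0 t] by (simp add: set_integrable_def)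
  show ?thesis
    unfolding Irho_def set_lebesgue_integral_def
    by (rule nn_integral_eq_integral[OF int])
       (use pos in \<open>auto intro!: AE_I2 simp: indicator_def less_imp_le\<close>)
qed

lemma I_inf_unb: assumes inf: "Irho_inf \<rho> = \<infinity>" shows "filterlim (Irho \<rho>) at_top at_top"
proof (subst filterlim_at_top, intro allI)
  fix Z :: real
  have "\<exists>t1\<ge>0. Z \<le> Irho \<rho> t1"
  proof (rule ccontr)
    assume "\<not> ?thesis"
    then have lt: "\<And>t. t \<ge> 0 \<Longrightarrow> Irho \<rho> t < Z" by (meson not_le)
    define f where "f = (\<lambda>(i::nat) x. ennreal (indicator {0..real i} x *\<^sub>R \<rho> x))"
    have fm: "f i \<in> borel_measurable lborel" for i
    proof -
      have "(\<lambda>x. indicator {0..real i} x * (indicator {0..} x *\<^sub>R \<rho> x)) \<in> borel_measurable lborel"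
        using meas0 by measurable
      moreover have "(\<lambda>x. indicator {0..real i} x * (indicator {0..} x *\<^sub>R \<rho> x)) = (\<lambda>x. indicator {0..real i} x *\<^sub>R \<rho> x)"
        by (auto simp: indicator_def)
      ultimately have "(\<lambda>x. indicator {0..real i} x *\<^sub>R \<rho> x) \<in> borel_measurable lborel" by simp
      then show ?thesis unfolding f_def by measurable
    qed
    have inc: "incseq f"
    proof (rule incseq_SucI, rule le_funI)
      fix i x show "f i x \<le> f (Suc i) x"
        using pos[of x] by (auto simp: f_def indicator_def less_imp_le)
    qed
    have sup: "(SUP i. f i x) = indicator {0..} x * ennreal (\<rho> x)" for x
    proof (cases "x \<ge> 0")
      case True
      show ?thesis
      proof (rule antisym)
        show "(SUP i. f i x) \<le> indicator {0..} x * ennreal (\<rho> x)"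
          by (rule SUP_least) (auto simp: f_def indicator_def)
        have "x \<le> real (nat \<lceil>x\<rceil>)" by (rule real_nat_ceiling_ge)
        then have "x \<in> {0..real (nat \<lceil>x\<rceil>)}" "x \<in> {0..}" using True by auto
        then have "f (nat \<lceil>x\<rceil>) x = indicator {0..} x * ennreal (\<rho> x)"
          unfolding f_def by simp
        then show "indicator {0..} x * ennreal (\<rho> x) \<le> (SUP i. f i x)"
          by (metis SUP_upper UNIV_I)
      qed
    next
      case False then show ?thesis by (simp add: f_def indicator_def)
    qed
    have "Irho_inf \<rho> = (\<integral>\<^sup>+ x. (SUP i. f i x) \<partial>lborel)"
      unfolding Irho_inf_def sup ..
    also have "\<dots> = (SUP i. integral\<^sup>N lborel (f i))"
      by (rule nn_integral_monotone_convergence_SUP[OF inc fm])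
    also have "\<dots> \<le> ennreal Z"
    proof (rule SUP_least)
      fix i :: nat
      have "integral\<^sup>N lborel (f i) = ennreal (Irho \<rho> (real i))"
        unfolding f_def by (rule I_eq_nn) simp
      also have "\<dots> \<le> ennreal Z" using lt[of "real i"] by (simp add: ennreal_leI)
      finally show "integral\<^sup>N lborel (f i) \<le> ennreal Z" .
    qed
    finally show False using inf by (simp add: top_unique)
  qed
  then obtain t1 where t1: "t1 \<ge> 0" "Z \<le> Irho \<rho> t1" by blast
  show "eventually (\<lambda>t. Z \<le> Irho \<rho> t) at_top"
    using eventually_ge_at_top[of t1]
  proof eventually_elim
    case (elim t) then show ?case using I_mono[of t1 t] t1 by simp
  qed
qed

end


context rv begin

lemma up_sum: assumes t0: "t0 > 0" and P: "\<And>s t. t0 \<le> s \<Longrightarrow> s \<le> t \<Longrightarrow> t \<le> 2 * s \<Longrightarrow> \<rho> t \<le> exp e * \<rho> s"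
  and M: "M \<ge> t0" and N: "N \<ge> (1::nat)"
  shows "M * (\<Sum>l=1..N. \<rho> (real l * M)) \<le> M * \<rho> M + exp e * (Irho \<rho> (real N * M) - Irho \<rho> M)"
  using N
proof (induction N rule: dec_induct)
  case base then show ?case by simp
next
  case (step n)
  have Mp: "M > 0" using M t0 by simp
  have n1: "real n \<ge> 1" using step(1) by simp
  have nM: "real n * M \<ge> M" using mult_right_mono[OF n1, of M] Mp by simp
  have "\<rho> (real (Suc n) * M) / exp e \<le> \<rho> x" if x: "x \<in> {real n * M .. real (Suc n) * M}" for x
  proof -
    have "t0 \<le> x" using x nM M by auto
    moreover have "x \<le> real (Suc n) * M" using x by auto
    moreover have "real (Suc n) * M \<le> 2 * x" using x nM by (auto simp: algebra_simps)
    ultimately have "\<rho> (real (Suc n) * M) \<le> exp e * \<rho> x" using P by blast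
    then show ?thesis by (simp add: field_simps)
  qed
  note low = this
  have "\<rho> (real (Suc n) * M) / exp e * (real (Suc n) * M - real n * M) \<le> Irho \<rho> (real (Suc n) * M) - Irho \<rho> (real n * M)"
    by (rule I_ge) (use Mp low in \<open>auto simp: algebra_simps\<close>)
  then have "M * \<rho> (real (Suc n) * M) \<le> exp e * (Irho \<rho> (real (Suc n) * M) - Irho \<rho> (real n * M))"
    by (simp add: field_simps)
  then show ?case using step(3) by (simp add: algebra_simps)
qed

lemma low_sum: assumes t0: "t0 > 0" and P: "\<And>s t. t0 \<le> s \<Longrightarrow> s \<le> t \<Longrightarrow> t \<le> 2 * s \<Longrightarrow> \<rho> t \<le> exp e * \<rho> s"
  and M: "M \<ge> t0"
  shows "exp (-e) * (Irho \<rho> (real (Suc N) * M) - Irho \<rho> M) \<le> M * (\<Sum>l=1..N. \<rho> (real l * M))"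
proof (induction N)
  case 0 then show ?case by simp
next
  case (Suc n)
  have Mp: "M > 0" using M t0 by simp
  have n1: "real (Suc n) \<ge> 1" by simp
  have nM: "real (Suc n) * M \<ge> M" using mult_right_mono[OF n1, of M] Mp by simp
  have "\<rho> x \<le> exp e * \<rho> (real (Suc n) * M)" if x: "x \<in> {real (Suc n) * M .. real (Suc (Suc n)) * M}" for x
  proof -
    have "t0 \<le> real (Suc n) * M" using nM M by auto
    moreover have "real (Suc n) * M \<le> x" using x by auto
    moreover have "x \<le> 2 * (real (Suc n) * M)"
    proof -
      have "real (Suc (Suc n)) * M = real (Suc n) * M + M" by (simp add: algebra_simps)
      then show ?thesis using x nM by auto
    qed
    ultimately show ?thesis using P by blast
  qed
  note up = this
  have "Irho \<rho> (real (Suc (Suc n)) * M) - Irho \<rho> (real (Suc n) * M) \<le> exp e * \<rho> (real (Suc n) * M) * (real (Suc (Suc n)) * M - real (Suc n) * M)"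
    by (rule I_le) (use Mp up in \<open>auto simp: algebra_simps\<close>)
  then have "exp (-e) * (Irho \<rho> (real (Suc (Suc n)) * M) - Irho \<rho> (real (Suc n) * M)) \<le> M * \<rho> (real (Suc n) * M)"
    by (simp add: field_simps exp_minus)
  then show ?case using Suc by (simp add: algebra_simps)
qed

end


context rv begin

lemma b_main: assumes r0: "(\<rho> \<longlongrightarrow> 0) at_top" and Iinf: "filterlim (Irho \<rho>) at_top at_top"
  and mu: "\<mu> > 0"
  shows "((\<lambda>T. \<Sum>l=1..nat \<lceil>T / (\<mu> * Irho \<rho> T)\<rceil>. \<rho> (real l * (\<mu> * Irho \<rho> T))) \<longlongrightarrow> 1 / \<mu>) at_top"
proof -
  define M where "M T = \<mu> * Irho \<rho> T" for T
  define N where "N T = nat \<lceil>T / M T\<rceil>" for T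
  define S where "S T = M T * (\<Sum>l=1..N T. \<rho> (real l * M T))" for T
  have Minf: "filterlim M at_top at_top"
    unfolding M_def by (rule filterlim_tendsto_pos_mult_at_top[OF tendsto_const mu Iinf])
  have rM: "((\<lambda>T. \<rho> (M T)) \<longlongrightarrow> 0) at_top" by (rule filterlim_compose[OF r0 Minf])
  have IMM: "((\<lambda>T. Irho \<rho> (M T) / M T) \<longlongrightarrow> 0) at_top" by (rule filterlim_compose[OF I_x_0[OF r0] Minf])
  have IM: "((\<lambda>T. Irho \<rho> (M T) / Irho \<rho> T) \<longlongrightarrow> 0) at_top"
  proof -
    have "((\<lambda>T. \<mu> * (Irho \<rho> (M T) / M T)) \<longlongrightarrow> \<mu> * 0) at_top" by (intro tendsto_intros IMM)
    moreover have "eventually (\<lambda>T. \<mu> * (Irho \<rho> (M T) / M T) = Irho \<rho> (M T) / Irho \<rho> T) at_top"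
      using eventually_gt_at_top[of 0]
    proof eventually_elim
      case (elim T) then have "Irho \<rho> T > 0" by (rule I_pos)
      then show ?case using mu by (simp add: M_def)
    qed
    ultimately show ?thesis by (auto intro: Lim_transform_eventually)
  qed
  have key: "eventually (\<lambda>T. 1 - \<epsilon>/2 \<le> S T / Irho \<rho> T \<and> S T / Irho \<rho> T \<le> 1 + \<epsilon>/2) at_top"
    if \<epsilon>: "\<epsilon> > 0" "\<epsilon> \<le> 1" for \<epsilon>
  proof -
    define e where "e = ln (1 + \<epsilon>/4)"
    have e: "e > 0" "exp e = 1 + \<epsilon>/4" using \<epsilon> by (auto simp: e_def)
    obtain t0 where t0: "t0 > 0" and P: "\<And>s t. t0 \<le> s \<Longrightarrow> s \<le> t \<Longrightarrow> t \<le> 2 * s \<Longrightarrow> \<rho> t \<le> exp e * \<rho> s"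
      using loc[OF e(1)] by auto
    define \<eta> where "\<eta> = \<epsilon> / (8 * \<mu>)"
    have \<eta>: "\<eta> > 0" using \<epsilon> mu by (simp add: \<eta>_def)
    have "eventually (\<lambda>x. \<rho> x < \<eta>) at_top" by (rule order_tendstoD(2)[OF r0 \<eta>])
    then obtain x\<eta> where x\<eta>: "\<And>x. x \<ge> x\<eta> \<Longrightarrow> \<rho> x < \<eta>" by (auto simp: eventually_at_top_linorder)
    have ev1: "eventually (\<lambda>T. T \<ge> max x\<eta> 1) at_top" by (rule eventually_ge_at_top)
    have ev2: "eventually (\<lambda>T. M T \<ge> t0) at_top" using Minf by (simp add: filterlim_at_top)
    have ev3: "eventually (\<lambda>T. \<rho> (M T) < \<epsilon> / (16 * \<mu>)) at_top"
      by (rule order_tendstoD(2)[OF rM]) (use \<epsilon> mu in simp)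
    have ev4: "eventually (\<lambda>T. Irho \<rho> (M T) / Irho \<rho> T < \<epsilon>/4) at_top"
      by (rule order_tendstoD(2)[OF IM]) (use \<epsilon> in simp)
    show ?thesis using ev1 ev2 ev3 ev4
    proof eventually_elim
      case (elim T)
      have Tp: "T > 0" and Tx: "T \<ge> x\<eta>" using elim(1) by auto
      have IT: "Irho \<rho> T > 0" using I_pos[OF Tp] .
      have Mt0: "M T \<ge> t0" using elim(2) .
      have Mp: "M T > 0" using Mt0 t0 by simp
      have MI: "M T = \<mu> * Irho \<rho> T" by (simp add: M_def)
      have TM: "T / M T > 0" using Tp Mp by simp
      have N1: "N T \<ge> 1" using TM unfolding N_def by linarith
      have NMge: "real (N T) * M T \<ge> T"
      proof -
        have "T / M T \<le> real (N T)" unfolding N_def by (rule real_nat_ceiling_ge)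
        then show ?thesis using Mp by (simp add: field_simps)
      qed
      have NMle: "real (N T) * M T \<le> T + M T"
      proof -
        have "real (N T) \<le> T / M T + 1" unfolding N_def using TM by linarith
        then have "real (N T) * M T \<le> (T / M T + 1) * M T" using Mp by (intro mult_right_mono) auto
        moreover have "(T / M T + 1) * M T = T + M T" using Mp by (simp add: field_simps)
        ultimately show ?thesis by linarith
      qed
      have "S T \<le> M T * \<rho> (M T) + exp e * (Irho \<rho> (real (N T) * M T) - Irho \<rho> (M T))"
        unfolding S_def by (rule up_sum[OF t0 P Mt0 N1])
      moreover have "Irho \<rho> (real (N T) * M T) - Irho \<rho> T \<le> \<eta> * (real (N T) * M T - T)"
        by (rule I_le) (use Tp NMge x\<eta> Tx in \<open>auto intro: less_imp_le\<close>)
      moreover have "\<eta> * (real (N T) * M T - T) \<le> \<eta> * M T" using NMle \<eta> by (intro mult_left_mono) auto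
      moreover have "Irho \<rho> (M T) \<ge> 0" using I_nonneg Mp by simp
      ultimately have "S T \<le> M T * \<rho> (M T) + exp e * (Irho \<rho> T + \<eta> * M T)"
        using e by (smt (verit) mult_left_mono exp_gt_zero)
      then have "S T / Irho \<rho> T \<le> (M T * \<rho> (M T) + exp e * (Irho \<rho> T + \<eta> * M T)) / Irho \<rho> T"
        using IT by (intro divide_right_mono) auto
      also have "\<dots> = \<mu> * \<rho> (M T) + exp e * (1 + \<mu> * \<eta>)"
        using IT unfolding MI by (simp add: field_simps)
      also have "\<dots> \<le> 1 + \<epsilon>/2"
      proof -
        have "\<mu> * \<rho> (M T) \<le> \<epsilon> / 16" using elim(3) mu by (simp add: field_simps)
        moreover have me: "\<mu> * \<eta> = \<epsilon> / 8" using mu by (simp add: \<eta>_def)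
        moreover have h: "exp e * (1 + \<mu> * \<eta>) = (1 + \<epsilon>/4) * (1 + \<epsilon>/8)" using e(2) me by simp
        moreover have "(1 + \<epsilon>/4) * (1 + \<epsilon>/8) \<le> 1 + 13 * \<epsilon> / 32"
        proof -
          have "\<epsilon> * \<epsilon> \<le> \<epsilon>" using \<epsilon> by (simp add: mult_le_cancel_left1)
          then show ?thesis by (simp add: algebra_simps)
        qed
        ultimately show ?thesis using \<epsilon>(1) by linarith
      qed
      finally have upper: "S T / Irho \<rho> T \<le> 1 + \<epsilon>/2" .
      have "exp (-e) * (Irho \<rho> (real (Suc (N T)) * M T) - Irho \<rho> (M T)) \<le> S T"
        unfolding S_def by (rule low_sum[OF t0 P Mt0])
      moreover have "Irho \<rho> T \<le> Irho \<rho> (real (Suc (N T)) * M T)"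
        using Tp NMge Mp by (intro I_mono) (auto simp: algebra_simps)
      ultimately have "exp (-e) * (Irho \<rho> T - Irho \<rho> (M T)) \<le> S T"
        by (smt (verit) mult_left_mono exp_gt_zero)
      then have "exp (-e) * (Irho \<rho> T - Irho \<rho> (M T)) / Irho \<rho> T \<le> S T / Irho \<rho> T"
        using IT by (intro divide_right_mono) auto
      moreover have "exp (-e) * (Irho \<rho> T - Irho \<rho> (M T)) / Irho \<rho> T = exp (-e) * (1 - Irho \<rho> (M T) / Irho \<rho> T)"
        using IT by (simp add: field_simps)
      moreover have "1 - \<epsilon>/2 \<le> exp (-e) * (1 - Irho \<rho> (M T) / Irho \<rho> T)"
      proof -
        have ee: "exp (-e) = 1 / (1 + \<epsilon>/4)" using e by (simp add: exp_minus inverse_eq_divide)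
        have "1 - \<epsilon>/4 \<le> exp (-e)"
        proof -
          have "(1 - \<epsilon>/4) * (1 + \<epsilon>/4) \<le> 1" by (simp add: algebra_simps)
          then show ?thesis unfolding ee using \<epsilon> by (simp add: field_simps)
        qed
        moreover have "1 - \<epsilon>/4 \<le> 1 - Irho \<rho> (M T) / Irho \<rho> T" using elim(4) by simp
        moreover have "0 \<le> 1 - \<epsilon>/4" using \<epsilon> by simp
        ultimately have "(1 - \<epsilon>/4) * (1 - \<epsilon>/4) \<le> exp (-e) * (1 - Irho \<rho> (M T) / Irho \<rho> T)"
          by (intro mult_mono) auto
        moreover have "1 - \<epsilon>/2 \<le> (1 - \<epsilon>/4) * (1 - \<epsilon>/4)" by (simp add: algebra_simps)
        ultimately show ?thesis by linarith
      qed
      ultimately have lower: "1 - \<epsilon>/2 \<le> S T / Irho \<rho> T" by linarith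
      show ?case using upper lower by simp
    qed
  qed
  have SI: "((\<lambda>T. S T / Irho \<rho> T) \<longlongrightarrow> 1) at_top"
  proof (rule order_tendstoI)
    fix a :: real assume a: "a < 1"
    define \<epsilon> where "\<epsilon> = min 1 (1 - a)"
    have "\<epsilon> > 0" "\<epsilon> \<le> 1" using a by (auto simp: \<epsilon>_def)
    moreover have bnd: "a < 1 - \<epsilon>/2" using a by (auto simp: \<epsilon>_def min_def field_simps)
    ultimately show "eventually (\<lambda>T. a < S T / Irho \<rho> T) at_top"
      using key[of \<epsilon>] by (auto elim: eventually_mono)
  next
    fix b :: real assume b: "b > 1"
    define \<epsilon> where "\<epsilon> = min 1 (b - 1)"
    have "\<epsilon> > 0" "\<epsilon> \<le> 1" using b by (auto simp: \<epsilon>_def)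
    moreover have bnd: "1 + \<epsilon>/2 < b" using b by (auto simp: \<epsilon>_def min_def field_simps)
    ultimately show "eventually (\<lambda>T. S T / Irho \<rho> T < b) at_top"
      using key[of \<epsilon>] by (auto elim: eventually_mono)
  qed
  have "((\<lambda>T. S T / Irho \<rho> T / \<mu>) \<longlongrightarrow> 1 / \<mu>) at_top"
    by (intro tendsto_intros SI) (use mu in simp)
  moreover have "eventually (\<lambda>T. S T / Irho \<rho> T / \<mu> = (\<Sum>l=1..nat \<lceil>T / (\<mu> * Irho \<rho> T)\<rceil>. \<rho> (real l * (\<mu> * Irho \<rho> T)))) at_top"
    using eventually_gt_at_top[of 0]
  proof eventually_elim
    case (elim T) then have "Irho \<rho> T > 0" by (rule I_pos)
    then show ?case using mu by (simp add: S_def M_def N_def)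
  qed
  ultimately show ?thesis by (auto intro: Lim_transform_eventually)
qed

end

theorem lemma2p9:
  fixes \<alpha> :: real and \<rho> :: "real \<Rightarrow> real"
  assumes "\<alpha> \<ge> 0" and "RV_class \<alpha> \<rho>"
  shows "regularly_varying (max (1 - \<alpha>) 0) (Irho \<rho>)
       \<and> Limsup (sequentially \<times>\<^sub>F at_top)
           (\<lambda>(n::nat, M::real). ereal (M * (\<Sum>l=1..n. \<rho> (real l * M)) / Irho \<rho> (real n * M))) < \<infinity>
       \<and> (Irho_inf \<rho> < \<infinity> \<longrightarrow>
            Limsup at_top (\<lambda>M::real. ennreal M * (\<Sum>l. ennreal (\<rho> (real (Suc l) * M)))) = 0)
       \<and> (\<forall>\<mu>>0. \<alpha> \<le> 1 \<and> (\<alpha> = 0 \<longrightarrow> (\<rho> \<longlongrightarrow> 0) at_top) \<and> (\<alpha> = 1 \<longrightarrow> Irho_inf \<rho> = \<infinity>) \<longrightarrow>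
            ((\<lambda>T. \<Sum>l=1..nat \<lceil>T / (\<mu> * Irho \<rho> T)\<rceil>. \<rho> (real l * (\<mu> * Irho \<rho> T)))
               \<longlongrightarrow> 1 / \<mu>) at_top)"
proof -
  interpret rv \<alpha> \<rho> using assms by unfold_locales
  have b: "\<forall>\<mu>>0. \<alpha> \<le> 1 \<and> (\<alpha> = 0 \<longrightarrow> (\<rho> \<longlongrightarrow> 0) at_top) \<and> (\<alpha> = 1 \<longrightarrow> Irho_inf \<rho> = \<infinity>) \<longrightarrow>
            ((\<lambda>T. \<Sum>l=1..nat \<lceil>T / (\<mu> * Irho \<rho> T)\<rceil>. \<rho> (real l * (\<mu> * Irho \<rho> T)))
               \<longlongrightarrow> 1 / \<mu>) at_top"
  proof (intro allI impI)
    fix \<mu> :: real assume mu: "\<mu> > 0"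
      and H: "\<alpha> \<le> 1 \<and> (\<alpha> = 0 \<longrightarrow> (\<rho> \<longlongrightarrow> 0) at_top) \<and> (\<alpha> = 1 \<longrightarrow> Irho_inf \<rho> = \<infinity>)"
    have r0: "(\<rho> \<longlongrightarrow> 0) at_top"
    proof (cases "\<alpha> = 0")
      case True then show ?thesis using H by simp
    next
      case False then have "\<alpha> > 0" using assms(1) by simp
      then show ?thesis by (rule rho_0)
    qed
    have Iinf: "filterlim (Irho \<rho>) at_top at_top"
    proof (cases "\<alpha> < 1")
      case True then show ?thesis by (rule I_inf_lt1)
    next
      case False then have "\<alpha> = 1" using H by simp
      then show ?thesis using H by (intro I_inf_unb) simp
    qed
    show "((\<lambda>T. \<Sum>l=1..nat \<lceil>T / (\<mu> * Irho \<rho> T)\<rceil>. \<rho> (real l * (\<mu> * Irho \<rho> T))) \<longlongrightarrow> 1 / \<mu>) at_top"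
      by (rule b_main[OF r0 Iinf mu])
  qed
  show ?thesis using rv_I a2 a3 b by blast
qed

end
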